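(* Let $1\le k\le n$, let $a_\rho$ ($\rho\in\Sigma(k,n)$) be real numbers and let $\lambda_0,\dots,\lambda_n\ge0$ be real numbers. Define the symmetric matrix $M=(m_{\rho\tilde\rho})_{\rho,\tilde\rho\in\Sigma(k,n)}$ by $$m_{\rho\tilde\rho}=\begin{cases}\lambda_{\rho^*}\big(\lambda_0+\sum_{i=1}^k\lambda_{\rho(i)}\big)&\text{if }\rho=\tilde\rho,\\ (-1)^{s+t}\,\lambda_{\rho^*}\lambda_{\rho(s)}&\text{if }\mathcal R(\rho)\cap\mathcal R(\tilde\rho^* )=\{\rho(s)\},\ \mathcal R(\rho^* )\cap\mathcal R(\tilde\rho)=\{\tilde\rho(t)\},\\ 0&\text{otherwise.}\end{cases}$$ Then $$\sum_{\rho,\tilde\rho\in\Sigma(k,n)}a_\rho a_{\tilde\rho}m_{\rho\tilde\rho}=\lambda_0\sum_{\rho\in\Sigma(k,n)}a_\rho^2\lambda_{\rho^*}+\langle\theta,\theta\rangle_{\mathrm{Alt}^{n-k+1}\mathbb{R}^n},\qquad \theta=\sum_{\rho\in\Sigma(k,n)}(-1)^{\sigma(\rho)}a_\rho\sum_{i=1}^k\sqrt{\lambda_{\rho^*}\lambda_{\rho(i)}}\;\mu'_{\rho^*}\wedge\mu'_{\rho(i)}.$$ In particular the left-hand side is nonnegative.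
   Context: $\Sigma(k,n)$ is the set of strictly increasing maps $\{1,\dots,k\}\to\{1,\dots,n\}$; for $\rho\in\Sigma(k,n)$, $\rho^*$ is the increasing map with range $\{1,\dots,n\}\setminus\mathcal R(\rho)$; $s,t\in\{1,\dots,k\}$. For a set $S$ of indices, $\lambda_S=\prod_{i\in S}\lambda_i$, and $\lambda_{\rho^*}=\lambda_{\mathcal R(\rho^* )}$. $\sigma(\rho)$ is the number of inversions of the sequence $\rho(1),\dots,\rho(k),\rho^*(1),\dots,\rho^*(n-k)$. $\mu_1,\dots,\mu_n$ is an orthonormal basis of $\mathbb{R}^n$, $\mu'_1,\dots,\mu'_n$ its dual basis, $\mu'_{\rho^*}=\mu'_{\rho^*(1)}\wedge\cdots\wedge\mu'_{\rho^*(n-k)}$, and the inner product on $\mathrm{Alt}^m\mathbb{R}^n$ is $\langle\omega,\eta\rangle=\sum_{\tau}\omega(\mu_{\tau(1)},\dots,\mu_{\tau(m)})\,\eta(\mu_{\tau(1)},\dots,\mu_{\tau(m)})$, summed over strictly increasing $\tau:\{1,\dots,m\}\to\{1,\dots,n\}$. *)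

theory Defs
  imports "HOL-Analysis.Analysis"
begin

text \<open>Sigma(k,n): strictly increasing maps {1..k} -> {1..n}, represented as functions
  nat => nat that are 0 outside {1..k} (so that the set is finite).\<close>
definition Sig :: "nat \<Rightarrow> nat \<Rightarrow> (nat \<Rightarrow> nat) set" where
  "Sig k n = {\<rho>. \<rho> ` {1..k} \<subseteq> {1..n} \<and> strict_mono_on {1..k} \<rho> \<and> (\<forall>i. i \<notin> {1..k} \<longrightarrow> \<rho> i = 0)}"

definition cmap :: "nat \<Rightarrow> nat \<Rightarrow> (nat \<Rightarrow> nat) \<Rightarrow> nat \<Rightarrow> nat" where
  "cmap k n \<rho> i = (if i \<in> {1..n-k} then sorted_list_of_set ({1..n} - \<rho> ` {1..k}) ! (i - 1) else 0)"

definition lam_star :: "nat \<Rightarrow> nat \<Rightarrow> (nat \<Rightarrow> real) \<Rightarrow> (nat \<Rightarrow> nat) \<Rightarrow> real" where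
  "lam_star k n lam \<rho> = (\<Prod>i\<in>cmap k n \<rho> ` {1..n-k}. lam i)"

definition inversions :: "nat list \<Rightarrow> nat" where
  "inversions xs = card {(i, j). i < j \<and> j < length xs \<and> xs ! j < xs ! i}"

definition sig_inv :: "nat \<Rightarrow> nat \<Rightarrow> (nat \<Rightarrow> nat) \<Rightarrow> nat" where
  "sig_inv k n \<rho> = inversions (map \<rho> [1..<k+1] @ map (cmap k n \<rho>) [1..<n-k+1])"

definition mentry :: "nat \<Rightarrow> nat \<Rightarrow> (nat \<Rightarrow> real) \<Rightarrow> (nat \<Rightarrow> nat) \<Rightarrow> (nat \<Rightarrow> nat) \<Rightarrow> real" where
  "mentry k n lam \<rho> \<rho>' =
     (if \<rho> = \<rho>' then lam_star k n lam \<rho> * (lam 0 + (\<Sum>i=1..k. lam (\<rho> i)))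
      else if (\<exists>s\<in>{1..k}. \<exists>t\<in>{1..k}.
                 \<rho> ` {1..k} \<inter> cmap k n \<rho>' ` {1..n-k} = {\<rho> s} \<and>
                 cmap k n \<rho> ` {1..n-k} \<inter> \<rho>' ` {1..k} = {\<rho>' t})
      then (let (s, t) = (SOME (s, t). s \<in> {1..k} \<and> t \<in> {1..k} \<and>
                 \<rho> ` {1..k} \<inter> cmap k n \<rho>' ` {1..n-k} = {\<rho> s} \<and>
                 cmap k n \<rho> ` {1..n-k} \<inter> \<rho>' ` {1..k} = {\<rho>' t})
            in (-1) ^ (s + t) * lam_star k n lam \<rho> * lam (\<rho> s))
      else 0)"

definition wedge :: "('v \<Rightarrow> real) list \<Rightarrow> 'v list \<Rightarrow> real" where
  "wedge \<phi>s vs = (\<Sum>p | p permutes {0..<length \<phi>s}.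
                    of_int (sign p) * (\<Prod>i<length \<phi>s. (\<phi>s ! i) (vs ! p i)))"

definition alt_inner :: "nat \<Rightarrow> nat \<Rightarrow> (nat \<Rightarrow> 'v) \<Rightarrow> ('v list \<Rightarrow> real) \<Rightarrow> ('v list \<Rightarrow> real) \<Rightarrow> real" where
  "alt_inner m n \<mu> \<omega> \<eta> =
     (\<Sum>\<tau>\<in>Sig m n. \<omega> (map (\<mu> \<circ> \<tau>) [1..<m+1]) * \<eta> (map (\<mu> \<circ> \<tau>) [1..<m+1]))"

definition theta :: "nat \<Rightarrow> nat \<Rightarrow> (nat \<Rightarrow> real) \<Rightarrow> ((nat \<Rightarrow> nat) \<Rightarrow> real) \<Rightarrow> (nat \<Rightarrow> 'v \<Rightarrow> real) \<Rightarrow> 'v list \<Rightarrow> real" where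
  "theta k n lam a \<mu>' vs =
     (\<Sum>\<rho>\<in>Sig k n. (-1) ^ sig_inv k n \<rho> * a \<rho> *
        (\<Sum>i=1..k. sqrt (lam_star k n lam \<rho> * lam (\<rho> i)) *
           wedge (map (\<mu>' \<circ> cmap k n \<rho>) [1..<n-k+1] @ [\<mu>' (\<rho> i)]) vs))"

end

theory Submission
  imports Defs
begin



lemma strict_sorted_map_upt:
  assumes "strict_mono_on {a..<b} f"
  shows "sorted_wrt (<) (map f [a..<b])"
  unfolding sorted_wrt_iff_nth_less
proof (intro allI impI)
  fix i j assume "i < j" "j < length (map f [a..<b])"
  hence h: "a+i<b" "a+j<b" by auto
  hence "f (a+i) < f (a+j)" using assms \<open>i<j\<close> unfolding strict_mono_on_def by auto
  thus "map f [a..<b] ! i < map f [a..<b] ! j" using h by (simp add: nth_upt)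
qed

lemma sig_list:
  assumes "\<rho> \<in> Sig k N"
  shows "map \<rho> [1..<k+1] = sorted_list_of_set (\<rho>`{1..k})"
proof -
  have sm: "strict_mono_on {1..<k+1} \<rho>" using assms unfolding Sig_def
    by (metis (mono_tags, lifting) Suc_eq_plus1 atLeastLessThanSuc_atLeastAtMost mem_Collect_eq)
  have "sorted_wrt (<) (map \<rho> [1..<k+1])" by (rule strict_sorted_map_upt[OF sm])
  hence "sorted (map \<rho> [1..<k+1]) \<and> distinct (map \<rho> [1..<k+1])" by (simp add: strict_sorted_iff)
  moreover have "set (map \<rho> [1..<k+1]) = \<rho>`{1..k}" by auto
  ultimately show ?thesis
    by (metis sorted_distinct_set_unique finite_imageI finite_atLeastAtMost
        sorted_sorted_list_of_set distinct_sorted_list_of_set set_sorted_list_of_set)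
qed

lemma sig_inj: "\<rho> \<in> Sig k N \<Longrightarrow> inj_on \<rho> {1..k}"
  unfolding Sig_def by (auto intro: strict_mono_on_imp_inj_on)

lemma sig_card: "\<rho> \<in> Sig k N \<Longrightarrow> card (\<rho>`{1..k}) = k"
  using card_image[OF sig_inj, of \<rho> k N] by simp

lemma sig_range: "\<rho> \<in> Sig k N \<Longrightarrow> \<rho>`{1..k} \<subseteq> {1..N}"
  unfolding Sig_def by auto

lemma sig_nth:
  assumes "\<rho> \<in> Sig k N" "i \<in> {1..k}"
  shows "\<rho> i = sorted_list_of_set (\<rho>`{1..k}) ! (i - 1)"
proof -
  have "map \<rho> [1..<k+1] ! (i-1) = \<rho> i" using assms(2) by (subst nth_map) (auto simp del: upt_Suc)
  thus ?thesis using sig_list[OF assms(1)] by simp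
qed

lemma sig_out: "\<rho> \<in> Sig k N \<Longrightarrow> i \<notin> {1..k} \<Longrightarrow> \<rho> i = 0"
  unfolding Sig_def by auto

lemma sig_eq:
  assumes "\<rho> \<in> Sig k N" "\<rho>' \<in> Sig k N" "\<rho>`{1..k} = \<rho>'`{1..k}"
  shows "\<rho> = \<rho>'"
proof
  fix i show "\<rho> i = \<rho>' i"
    by (cases "i \<in> {1..k}") (metis assms sig_nth, metis assms sig_out)
qed

definition of_set :: "nat \<Rightarrow> nat set \<Rightarrow> nat \<Rightarrow> nat" where
  "of_set m T i = (if i \<in> {1..m} then sorted_list_of_set T ! (i - 1) else 0)"

lemma of_set_sig:
  assumes "T \<subseteq> {1..N}" "card T = m"
  shows "of_set m T \<in> Sig m N" "of_set m T ` {1..m} = T"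
proof -
  have fin: "finite T" using assms(1) finite_subset by blast
  let ?l = "sorted_list_of_set T"
  have len: "length ?l = m" using assms by simp
  have ss: "sorted_wrt (<) ?l" by simp
  have img: "of_set m T ` {1..m} = set ?l"
  proof
    show "of_set m T ` {1..m} \<subseteq> set ?l" using len by (auto simp: of_set_def)
    show "set ?l \<subseteq> of_set m T ` {1..m}"
    proof
      fix x assume "x \<in> set ?l"
      then obtain j where j: "j < m" "?l ! j = x" using len by (auto simp: in_set_conv_nth)
      hence "of_set m T (j+1) = x" by (simp add: of_set_def)
      thus "x \<in> of_set m T ` {1..m}" using j by force
    qed
  qed
  thus "of_set m T ` {1..m} = T" using fin by simp
  have "strict_mono_on {1..m} (of_set m T)"
    unfolding strict_mono_on_def of_set_def using ss len
    by (auto simp: sorted_wrt_iff_nth_less)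
  thus "of_set m T \<in> Sig m N" unfolding Sig_def
    using \<open>of_set m T ` {1..m} = T\<close> assms(1) by (auto simp: of_set_def)
qed

lemma cmap_list:
  assumes "\<rho> \<in> Sig k N" "k \<le> N"
  shows "map (cmap k N \<rho>) [1..<N-k+1] = sorted_list_of_set ({1..N} - \<rho>`{1..k})"
proof -
  let ?C = "{1..N} - \<rho>`{1..k}"
  have "card ?C = N - k" using sig_card[OF assms(1)] sig_range[OF assms(1)]
    by (simp add: card_Diff_subset)
  hence len: "length (sorted_list_of_set ?C) = N - k" by simp
  show ?thesis
  proof (rule nth_equalityI)
    show "length (map (cmap k N \<rho>) [1..<N-k+1]) = length (sorted_list_of_set ?C)" using len by (simp del: upt_Suc)
    fix j assume "j < length (map (cmap k N \<rho>) [1..<N-k+1])"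
    hence j: "j < N - k" by (simp del: upt_Suc)
    have "map (cmap k N \<rho>) [1..<N-k+1] ! j = cmap k N \<rho> (j+1)" using j
      by (subst nth_map) (auto simp del: upt_Suc)
    also have "\<dots> = sorted_list_of_set ?C ! j" using j by (simp add: cmap_def)
    finally show "map (cmap k N \<rho>) [1..<N-k+1] ! j = sorted_list_of_set ?C ! j" .
  qed
qed

lemma cmap_img:
  assumes "\<rho> \<in> Sig k N" "k \<le> N"
  shows "cmap k N \<rho> ` {1..N-k} = {1..N} - \<rho>`{1..k}"
proof -
  have "cmap k N \<rho> ` {1..N-k} = set (map (cmap k N \<rho>) [1..<N-k+1])" by auto
  also have "\<dots> = {1..N} - \<rho>`{1..k}" by (simp only: cmap_list[OF assms]) simp
  finally show ?thesis .
qed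

lemma lam_star_eq:
  assumes "\<rho> \<in> Sig k N" "k \<le> N"
  shows "lam_star k N lam \<rho> = prod lam ({1..N} - \<rho>`{1..k})"
  unfolding lam_star_def cmap_img[OF assms] ..

lemma wedge_basis:
  fixes \<mu> :: "nat \<Rightarrow> 'v" and \<mu>' :: "nat \<Rightarrow> 'v \<Rightarrow> real"
  assumes d: "\<And>i j. i \<in> {1..N} \<Longrightarrow> j \<in> {1..N} \<Longrightarrow> \<mu>' i (\<mu> j) = (if i = j then 1 else 0)"
    and cs: "set cs \<subseteq> {1..N}" "length cs = m"
    and ts: "set ts \<subseteq> {1..N}" "length ts = m" "distinct ts"
    and p0: "p0 permutes {0..<m}" "\<forall>i<m. cs!i = ts!(p0 i)"
  shows "wedge (map \<mu>' cs) (map \<mu> ts) = of_int (sign p0)"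
proof -
  have "wedge (map \<mu>' cs) (map \<mu> ts) = (\<Sum>p | p permutes {0..<m}. (if p = p0 then of_int (sign p0) else 0))"
    unfolding wedge_def
  proof (rule sum.cong)
    show "{p. p permutes {0..<length (map \<mu>' cs)}} = {p. p permutes {0..<m}}" using cs by simp
  next
    fix p assume "p \<in> {p. p permutes {0..<m}}"
    hence pp: "p permutes {0..<m}" by simp
    have pm: "\<And>i. i < m \<Longrightarrow> p i < m" using permutes_in_image[OF pp] by auto
    have fac: "\<And>i. i < m \<Longrightarrow> (map \<mu>' cs ! i) (map \<mu> ts ! p i) = (if cs!i = ts!(p i) then 1 else 0)"
    proof -
      fix i assume i: "i < m"
      have "cs!i \<in> {1..N}" using cs i nth_mem by blast
      moreover have "ts!(p i) \<in> {1..N}" using ts pm[OF i] nth_mem by blast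
      ultimately show "(map \<mu>' cs ! i) (map \<mu> ts ! p i) = (if cs!i = ts!(p i) then 1 else 0)"
        using i pm[OF i] cs ts by (simp add: d)
    qed
    show "of_int (sign p) * (\<Prod>i<length (map \<mu>' cs). (map \<mu>' cs ! i) (map \<mu> ts ! p i))
          = (if p = p0 then of_int (sign p0) else 0)"
    proof (cases "p = p0")
      case True
      thus ?thesis using p0 cs fac by simp
    next
      case False
      have "\<exists>i<m. p i \<noteq> p0 i"
      proof (rule ccontr)
        assume "\<not> ?thesis"
        hence "\<forall>i. p i = p0 i"
          by (metis atLeastLessThan_iff le0 permutes_not_in[OF pp] permutes_not_in[OF p0(1)])
        thus False using False by blast
      qed
      then obtain i where i: "i < m" "p i \<noteq> p0 i" by blast
      have "ts!(p i) \<noteq> ts!(p0 i)" using i pm[OF i(1)] ts permutes_in_image[OF p0(1), of i]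
        by (simp add: nth_eq_iff_index_eq)
      hence "cs!i \<noteq> ts!(p i)" using p0 i by simp
      hence "(\<Prod>i<m. (map \<mu>' cs ! i) (map \<mu> ts ! p i)) = 0"
        using fac i by (intro prod_zero) auto
      thus ?thesis using False cs by simp
    qed
  qed
  also have "\<dots> = of_int (sign p0)" using p0 by (simp add: sum.delta finite_permutations)
  finally show ?thesis .
qed

lemma wedge_zero:
  fixes \<mu> :: "nat \<Rightarrow> 'v" and \<mu>' :: "nat \<Rightarrow> 'v \<Rightarrow> real"
  assumes d: "\<And>i j. i \<in> {1..N} \<Longrightarrow> j \<in> {1..N} \<Longrightarrow> \<mu>' i (\<mu> j) = (if i = j then 1 else 0)"
    and cs: "set cs \<subseteq> {1..N}" "length cs = m"
    and ts: "set ts \<subseteq> {1..N}" "length ts = m"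
    and i: "i < m" "cs!i \<notin> set ts"
  shows "wedge (map \<mu>' cs) (map \<mu> ts) = 0"
  unfolding wedge_def
proof (rule sum.neutral, rule ballI)
  fix p assume "p \<in> {p. p permutes {0..<length (map \<mu>' cs)}}"
  hence pp: "p permutes {0..<m}" using cs by simp
  have "p i < m" using permutes_in_image[OF pp] i by auto
  hence "ts!(p i) \<in> set ts" using ts nth_mem by auto
  hence "ts!(p i) \<in> {1..N}" using ts by blast
  moreover have "cs!i \<in> {1..N}" using cs i nth_mem by blast
  ultimately have "(map \<mu>' cs ! i) (map \<mu> ts ! p i) = 0"
    using i \<open>p i < m\<close> cs ts d by auto
  hence "(\<Prod>i<length (map \<mu>' cs). (map \<mu>' cs ! i) (map \<mu> ts ! p i)) = 0"
    using i cs by (intro prod_zero) auto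
  thus "of_int (sign p) * (\<Prod>i<length (map \<mu>' cs). (map \<mu>' cs ! i) (map \<mu> ts ! p i)) = 0" by simp
qed

definition rot :: "nat \<Rightarrow> nat \<Rightarrow> nat \<Rightarrow> nat" where
  "rot q r i = (if i < q then i else if i < r then i+1 else if i = r then q else i)"

lemma rot_perm: "q \<le> r \<Longrightarrow> rot q r permutes {q..r} \<and> sign (rot q r) = (-1)^(r-q)"
proof (induction r)
  case 0
  hence r: "rot q 0 = id" by (auto simp: rot_def)
  show ?case unfolding r using 0 by (simp; simp add: id_def)
next
  case (Suc r)
  show ?case
  proof (cases "q = Suc r")
    case True
    hence r: "rot q (Suc r) = id" by (auto simp: rot_def)
    show ?thesis unfolding r using True by (simp; simp add: id_def)
  next
    case False
    hence qr: "q \<le> r" using Suc by simp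
    have eq: "rot q (Suc r) = rot q r \<circ> Transposition.transpose r (Suc r)"
      using qr by (auto simp: rot_def Transposition.transpose_def fun_eq_iff)
    have p1: "rot q r permutes {q..Suc r}" using Suc.IH[OF qr] permutes_subset by fastforce
    have p2: "Transposition.transpose r (Suc r) permutes {q..Suc r}" using qr by (intro permutes_swap_id) auto
    have "sign (rot q (Suc r)) = sign (rot q r) * sign (Transposition.transpose r (Suc r))"
      unfolding eq using p1 p2 by (intro sign_compose) (auto intro: permutes_imp_permutation)
    also have "\<dots> = (-1)^(Suc r - q)" using Suc.IH[OF qr] qr by (simp add: sign_swap_id Suc_diff_le)
    finally show ?thesis using eq permutes_compose[OF p2 p1] by (simp only:)
  qed
qed



lemma split_filter:
  "sorted_wrt (<) xs \<Longrightarrow> (x::nat) \<notin> set xs \<Longrightarrow> xs = filter (\<lambda>y. y < x) xs @ filter (\<lambda>y. x < y) xs"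
proof (induction xs)
  case Nil thus ?case by simp
next
  case (Cons a xs)
  show ?case
  proof (cases "a < x")
    case True thus ?thesis using Cons by simp
  next
    case False
    hence ax: "x < a" using Cons by auto
    hence "\<forall>y\<in>set xs. x < y" using Cons by auto
    hence "filter (\<lambda>y. y < x) xs = []" "filter (\<lambda>y. x < y) xs = xs"
      by (auto simp: filter_empty_conv)
    thus ?thesis using ax by simp
  qed
qed

lemma insert_nth:
  fixes C :: "nat set"
  assumes fin: "finite C" and x: "x \<notin> C" and i: "i \<le> card C"
  shows "(sorted_list_of_set C @ [x]) ! i = sorted_list_of_set (insert x C) ! rot (card {y\<in>C. y<x}) (card C) i"
    and "card {y\<in>C. y<x} \<le> card C"
proof -
  let ?cl = "sorted_list_of_set C"
  let ?A = "filter (\<lambda>y. y < x) ?cl" and ?B = "filter (\<lambda>y. x < y) ?cl"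
  have cl: "sorted_wrt (<) ?cl" "set ?cl = C" "distinct ?cl" using fin by auto
  have AB: "?cl = ?A @ ?B" using split_filter cl x by auto
  have qA: "card {y\<in>C. y<x} = length ?A"
  proof -
    have "set ?A = {y\<in>C. y<x}" using cl by auto
    moreover have "distinct ?A" using cl by simp
    ultimately show ?thesis by (metis distinct_card)
  qed
  have lenC: "length ?cl = card C" using fin by simp
  have "sorted_wrt (<) (?A @ x # ?B)"
    using cl(1) by (auto simp: sorted_wrt_append sorted_wrt_filter)
  moreover have "set (?A @ x # ?B) = insert x C" using cl x by auto
  ultimately have ts: "sorted_list_of_set (insert x C) = ?A @ x # ?B"
    using fin by (metis finite_insert sorted_list_of_set_unique strict_sorted_iff
        distinct_card sorted_list_of_set.sorted_key_list_of_set_unique)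
  show "card {y\<in>C. y<x} \<le> card C" using qA AB lenC by (metis le_add1 length_append)
  show "(?cl @ [x]) ! i = sorted_list_of_set (insert x C) ! rot (card {y\<in>C. y<x}) (card C) i"
  proof -
    consider "i < length ?A" | "length ?A \<le> i" "i < card C" | "i = card C" using i by linarith
    thus ?thesis
    proof cases
      case 1
      hence "i < card C" using AB lenC by (metis length_append less_le_trans le_add1)
      thus ?thesis using 1 unfolding ts qA rot_def
        by (subst (1) AB) (simp add: nth_append)
    next
      case 2
      hence "i - length ?A < length ?B" using AB lenC by (metis length_append add_diff_cancel_left' diff_less_mono)
      thus ?thesis using 2 unfolding ts qA rot_def
        by (subst (1) AB) (simp add: nth_append Suc_diff_le)
    next
      case 3
      have "length ?A \<le> card C" using lenC by (metis length_filter_le)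
      thus ?thesis unfolding ts qA rot_def using lenC 3 by (simp add: nth_append)
    qed
  qed
qed

lemma wedge_theta:
  fixes \<mu> :: "nat \<Rightarrow> 'v" and \<mu>' :: "nat \<Rightarrow> 'v \<Rightarrow> real"
  assumes d: "\<And>i j. i \<in> {1..N} \<Longrightarrow> j \<in> {1..N} \<Longrightarrow> \<mu>' i (\<mu> j) = (if i = j then 1 else 0)"
    and \<rho>: "\<rho> \<in> Sig k N" and kN: "k \<le> N" and i: "i \<in> {1..k}"
    and \<tau>: "\<tau> \<in> Sig (N-k+1) N"
  shows "wedge (map (\<mu>' \<circ> cmap k N \<rho>) [1..<N-k+1] @ [\<mu>' (\<rho> i)]) (map (\<mu> \<circ> \<tau>) [1..<N-k+1+1])
    = (if \<tau>`{1..N-k+1} = insert (\<rho> i) ({1..N} - \<rho>`{1..k})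
       then (-1)^(N-k - card {y\<in>{1..N} - \<rho>`{1..k}. y < \<rho> i}) else 0)"
proof -
  define C where "C = {1..N} - \<rho>`{1..k}"
  define x where "x = \<rho> i"
  define cs where "cs = sorted_list_of_set C @ [x]"
  define ts where "ts = sorted_list_of_set (\<tau>`{1..N-k+1})"
  have finC: "finite C" unfolding C_def by simp
  have cardC: "card C = N - k" unfolding C_def using sig_card[OF \<rho>] sig_range[OF \<rho>]
    by (simp add: card_Diff_subset)
  have "\<rho> i \<in> \<rho>`{1..k}" using i by blast
  hence xC: "x \<notin> C" "x \<in> {1..N}" unfolding C_def x_def using sig_range[OF \<rho>] by auto
  have e1: "map (\<mu>' \<circ> cmap k N \<rho>) [1..<N-k+1] @ [\<mu>' (\<rho> i)] = map \<mu>' cs"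
    unfolding cs_def C_def x_def by (simp only: map_map[symmetric] cmap_list[OF \<rho> kN]) simp
  have e2: "map (\<mu> \<circ> \<tau>) [1..<N-k+1+1] = map \<mu> ts"
    unfolding ts_def by (simp only: map_map[symmetric] sig_list[OF \<tau>])
  have csN: "set cs \<subseteq> {1..N}" "length cs = N-k+1" using xC finC cardC unfolding cs_def C_def by auto
  have tsN: "set ts \<subseteq> {1..N}" "length ts = N-k+1" "distinct ts"
    unfolding ts_def using sig_range[OF \<tau>] sig_card[OF \<tau>] by auto
  show ?thesis
  proof (cases "\<tau>`{1..N-k+1} = insert x C")
    case True
    let ?q = "card {y\<in>C. y<x}"
    have ts': "ts = sorted_list_of_set (insert x C)" unfolding ts_def True ..
    have qle: "?q \<le> N - k" using insert_nth(2)[OF finC xC(1), of 0] cardC by simp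
    have rp: "rot ?q (N-k) permutes {0..<N-k+1}"
      using rot_perm[OF qle] by (auto intro: permutes_subset)
    have "\<forall>j<N-k+1. cs!j = ts!(rot ?q (N-k) j)"
      unfolding cs_def ts' using insert_nth(1)[OF finC xC(1)] cardC by auto
    hence "wedge (map \<mu>' cs) (map \<mu> ts) = of_int (sign (rot ?q (N-k)))"
      by (intro wedge_basis[where N=N and \<mu>'=\<mu>' and \<mu>=\<mu>, OF d csN tsN rp]) auto
    also have "\<dots> = (-1)^(N-k - ?q)" using rot_perm[OF qle] by simp
    finally show ?thesis unfolding e1 e2 using True unfolding C_def x_def by simp
  next
    case False
    have "\<exists>j<N-k+1. cs!j \<notin> set ts"
    proof (rule ccontr)
      assume "\<not> ?thesis"
      hence "set cs \<subseteq> set ts" by (auto simp: in_set_conv_nth csN)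
      moreover have "card (set cs) = card (set ts)"
        using csN tsN xC finC cardC unfolding cs_def by (simp add: distinct_card)
      ultimately have "set cs = set ts" by (simp add: card_subset_eq)
      moreover have "set ts = \<tau>`{1..N-k+1}" unfolding ts_def by simp
      moreover have "set cs = insert x C" unfolding cs_def using finC by auto
      ultimately show False using False by simp
    qed
    then obtain j where "j < N-k+1" "cs!j \<notin> set ts" by blast
    hence "wedge (map \<mu>' cs) (map \<mu> ts) = 0"
      by (intro wedge_zero[where N=N and \<mu>'=\<mu>' and \<mu>=\<mu>, OF d csN(1,2) tsN(1,2)])
    thus ?thesis unfolding e1 e2 using False unfolding C_def x_def by simp
  qed
qed



lemma sig_mono: "\<rho> \<in> Sig k N \<Longrightarrow> i \<in> {1..k} \<Longrightarrow> j \<in> {1..k} \<Longrightarrow> \<rho> i < \<rho> j \<longleftrightarrow> i < j"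
  unfolding Sig_def by (auto simp: strict_mono_on_less)

lemma below_R:
  assumes \<rho>: "\<rho> \<in> Sig k N" and i: "i \<in> {1..k}"
  shows "{y\<in>\<rho>`{1..k}. y < \<rho> i} = \<rho>`{1..<i}"
  using sig_mono[OF \<rho> _ i] i by auto

lemma card_below:
  assumes \<rho>: "\<rho> \<in> Sig k N" and i: "i \<in> {1..k}"
  shows "card {y\<in>{1..N} - \<rho>`{1..k}. y < \<rho> i} = \<rho> i - i" "i \<le> \<rho> i"
proof -
  let ?R = "\<rho>`{1..k}"
  have inj: "inj_on \<rho> {1..<i}" using sig_inj[OF \<rho>] i by (auto intro: inj_on_subset)
  have cR: "card {y\<in>?R. y < \<rho> i} = i - 1"
    unfolding below_R[OF \<rho> i] using card_image[OF inj] by simp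
  have "\<rho> i \<in> ?R" using i by blast
  hence ri: "\<rho> i \<in> {1..N}" using sig_range[OF \<rho>] by blast
  have split: "{1..<\<rho> i} = {y\<in>?R. y < \<rho> i} \<union> {y\<in>{1..N} - ?R. y < \<rho> i}" using ri sig_range[OF \<rho>] by auto
  have "card {1..<\<rho> i} = card {y\<in>?R. y < \<rho> i} + card {y\<in>{1..N} - ?R. y < \<rho> i}"
    unfolding split by (rule card_Un_disjoint) auto
  hence eq: "\<rho> i - 1 = (i - 1) + card {y\<in>{1..N} - ?R. y < \<rho> i}" using cR by simp
  thus "card {y\<in>{1..N} - ?R. y < \<rho> i} = \<rho> i - i" using i by auto
  have "1 \<le> i" "1 \<le> \<rho> i" using i ri by auto
  thus "i \<le> \<rho> i" using eq by linarith
qed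


lemma card_Sigma_sum:
  assumes "finite A" "\<And>a. a \<in> A \<Longrightarrow> finite (B a)"
  shows "card (Sigma A B) = (\<Sum>a\<in>A. card (B a))"
  using assms by (simp add: card_SigmaI)

lemma inv_split:
  fixes xs ys :: "nat list"
  assumes "sorted_wrt (<) xs" "sorted_wrt (<) ys"
  shows "inversions (xs @ ys) = (\<Sum>i<length xs. card {y\<in>set ys. y < xs!i})"
proof -
  let ?m = "length xs" and ?n = "length ys"
  have P: "{(i, j). i < j \<and> j < length (xs@ys) \<and> (xs@ys) ! j < (xs@ys) ! i}
      = Sigma {..<?m} (\<lambda>i. {j. ?m \<le> j \<and> j < ?m + ?n \<and> ys!(j - ?m) < xs!i})"
  proof (rule set_eqI)
    fix p :: "nat \<times> nat"
    obtain i j where p: "p = (i,j)" by (cases p)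
    show "p \<in> {(i, j). i < j \<and> j < length (xs@ys) \<and> (xs@ys) ! j < (xs@ys) ! i}
      \<longleftrightarrow> p \<in> Sigma {..<?m} (\<lambda>i. {j. ?m \<le> j \<and> j < ?m + ?n \<and> ys!(j - ?m) < xs!i})"
    proof
      assume "p \<in> {(i, j). i < j \<and> j < length (xs@ys) \<and> (xs@ys) ! j < (xs@ys) ! i}"
      hence 1: "i < j" "j < ?m + ?n" "(xs@ys) ! j < (xs@ys) ! i" using p by simp_all
      have jm: "\<not> (j < ?m)"
      proof
        assume j: "j < ?m"
        hence "xs!i < xs!j" using 1 assms(1) by (auto simp: sorted_wrt_iff_nth_less)
        thus False using 1 j by (auto simp: nth_append)
      qed
      moreover have "i < ?m"
      proof (rule ccontr)
        assume i: "\<not> i < ?m"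
        hence "i - ?m < j - ?m" "j - ?m < ?n" using 1 by auto
        hence "ys!(i - ?m) < ys!(j - ?m)" using assms(2) by (auto simp: sorted_wrt_iff_nth_less)
        thus False using 1 i jm by (auto simp: nth_append)
      qed
      moreover have "ys!(j - ?m) < xs!i" using 1(3) jm \<open>i < ?m\<close> by (simp add: nth_append)
      ultimately show "p \<in> Sigma {..<?m} (\<lambda>i. {j. ?m \<le> j \<and> j < ?m + ?n \<and> ys!(j - ?m) < xs!i})"
        using 1 p by simp
    next
      assume "p \<in> Sigma {..<?m} (\<lambda>i. {j. ?m \<le> j \<and> j < ?m + ?n \<and> ys!(j - ?m) < xs!i})"
      hence h: "i < ?m" "?m \<le> j" "j < ?m + ?n" "ys!(j - ?m) < xs!i" using p by simp_all
      hence "(xs@ys) ! j < (xs@ys) ! i" by (simp add: nth_append)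
      thus "p \<in> {(i, j). i < j \<and> j < length (xs@ys) \<and> (xs@ys) ! j < (xs@ys) ! i}"
        using p h by simp
    qed
  qed
  have "inversions (xs@ys) = (\<Sum>i<?m. card {j. ?m \<le> j \<and> j < ?m + ?n \<and> ys!(j - ?m) < xs!i})"
    unfolding inversions_def P by (rule card_Sigma_sum) auto
  also have "\<dots> = (\<Sum>i<?m. card {y\<in>set ys. y < xs!i})"
  proof (rule sum.cong[OF refl])
    fix i
    let ?J = "{j. ?m \<le> j \<and> j < ?m + ?n \<and> ys!(j - ?m) < xs!i}"
    have d: "distinct ys" using assms(2) by (simp add: strict_sorted_iff)
    have inj: "inj_on (\<lambda>j. ys!(j - ?m)) ?J"
    proof (rule inj_onI)
      fix a b assume ab: "a \<in> ?J" "b \<in> ?J" and e: "ys!(a - ?m) = ys!(b - ?m)"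
      have l: "a - ?m < ?n" "b - ?m < ?n" "?m \<le> a" "?m \<le> b" using ab by auto
      have "a - ?m = b - ?m" using nth_eq_iff_index_eq[OF d l(1,2)] e by simp
      thus "a = b" using l by simp
    qed
    have img: "(\<lambda>j. ys!(j - ?m)) ` ?J = {y\<in>set ys. y < xs!i}"
    proof
      show "(\<lambda>j. ys!(j - ?m)) ` ?J \<subseteq> {y\<in>set ys. y < xs!i}" by auto
      show "{y\<in>set ys. y < xs!i} \<subseteq> (\<lambda>j. ys!(j - ?m)) ` ?J"
      proof
        fix y assume y: "y \<in> {y\<in>set ys. y < xs!i}"
        then obtain t where t: "t < ?n" "ys!t = y" by (auto simp: in_set_conv_nth)
        hence "?m + t \<in> ?J" using y by auto
        moreover have "y = (\<lambda>j. ys!(j - ?m)) (?m + t)" using t by simp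
        ultimately show "y \<in> (\<lambda>j. ys!(j - ?m)) ` ?J" by (rule rev_image_eqI)
      qed
    qed
    show "card ?J = card {y\<in>set ys. y < xs!i}"
      using card_image[OF inj] img by simp
  qed
  finally show ?thesis .
qed

lemma sig_inv_eq:
  assumes \<rho>: "\<rho> \<in> Sig k N" and kN: "k \<le> N"
  shows "sig_inv k N \<rho> = (\<Sum>i=1..k. \<rho> i - i)"
proof -
  let ?C = "{1..N} - \<rho>`{1..k}"
  have "sig_inv k N \<rho> = inversions (sorted_list_of_set (\<rho>`{1..k}) @ sorted_list_of_set ?C)"
    unfolding sig_inv_def cmap_list[OF \<rho> kN] sig_list[OF \<rho>] ..
  also have "\<dots> = (\<Sum>i<k. card {y\<in>?C. y < sorted_list_of_set (\<rho>`{1..k}) ! i})"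
  proof (rule trans[OF inv_split])
    show "sorted_wrt (<) (sorted_list_of_set (\<rho>`{1..k}))" by simp
    show "sorted_wrt (<) (sorted_list_of_set ?C)" by simp
    have "length (sorted_list_of_set (\<rho>`{1..k})) = k" using sig_card[OF \<rho>] by simp
    moreover have "set (sorted_list_of_set ?C) = ?C" by simp
    ultimately show "(\<Sum>i<length (sorted_list_of_set (\<rho>`{1..k})). card {y\<in>set (sorted_list_of_set ?C). y < sorted_list_of_set (\<rho>`{1..k}) ! i})
      = (\<Sum>i<k. card {y\<in>?C. y < sorted_list_of_set (\<rho>`{1..k}) ! i})" by (simp only:)
  qed
  also have "\<dots> = (\<Sum>i<k. card {y\<in>?C. y < \<rho> (i+1)})"
  proof (rule sum.cong[OF refl])
    fix i assume "i \<in> {..<k}"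
    hence "\<rho> (i+1) = sorted_list_of_set (\<rho>`{1..k}) ! i" using sig_nth[OF \<rho>, of "i+1"] by simp
    thus "card {y\<in>?C. y < sorted_list_of_set (\<rho>`{1..k}) ! i} = card {y\<in>?C. y < \<rho> (i+1)}" by simp
  qed
  also have "\<dots> = (\<Sum>i<k. \<rho> (i+1) - (i+1))"
  proof (rule sum.cong[OF refl])
    fix i assume "i \<in> {..<k}"
    thus "card {y\<in>?C. y < \<rho> (i+1)} = \<rho> (i+1) - (i+1)" using card_below(1)[OF \<rho>, of "i+1"] by simp
  qed
  also have "\<dots> = (\<Sum>i=1..k. \<rho> i - i)"
  proof -
    have "(\<Sum>i=1..k. \<rho> i - i) = (\<Sum>i\<in>Suc ` {..<k}. \<rho> i - i)"
      by (simp add: atLeast1_atMost_eq_remove0 image_Suc_lessThan)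
    also have "\<dots> = (\<Sum>i<k. \<rho> (i+1) - (i+1))" by (subst sum.reindex) auto
    finally show ?thesis by simp
  qed
  finally show ?thesis .
qed



lemma neg1_pow_shift: "a + b = c \<Longrightarrow> (-1::real)^a = (-1)^(c + b)"
proof -
  assume "a + b = c"
  hence "c + b = a + 2*b" by simp
  thus ?thesis by (simp add: power_add power_mult)
qed

lemma neg1_pow_even: "(-1::real)^(2*x + y) = (-1)^y"
  by (simp add: power_add power_mult)

definition eps :: "nat \<Rightarrow> nat \<Rightarrow> (nat \<Rightarrow> nat) \<Rightarrow> nat \<Rightarrow> real" where
  "eps k N \<rho> i = (-1)^(N-k - card {y\<in>{1..N} - \<rho>`{1..k}. y < \<rho> i})"

definition sgn2 :: "nat \<Rightarrow> nat \<Rightarrow> (nat \<Rightarrow> nat) \<Rightarrow> nat \<Rightarrow> real" where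
  "sgn2 k N \<rho> i = (-1)^sig_inv k N \<rho> * eps k N \<rho> i"

lemma sgn2_formula:
  assumes \<rho>: "\<rho> \<in> Sig k N" and kN: "k \<le> N" and i: "i \<in> {1..k}"
  shows "sgn2 k N \<rho> i = (-1)^(sum id (\<rho>`{1..k}) + (\<Sum>j=1..k. j) + (N-k) + \<rho> i + i)"
proof -
  let ?C = "{1..N} - \<rho>`{1..k}"
  have ge: "\<And>j. j \<in> {1..k} \<Longrightarrow> j \<le> \<rho> j" using card_below(2)[OF \<rho>] by blast
  have "(\<Sum>j=1..k. \<rho> j - j) + (\<Sum>j=1..k. j) = (\<Sum>j=1..k. \<rho> j)"
    by (subst sum.distrib[symmetric]) (rule sum.cong, auto simp: ge)
  also have "\<dots> = sum id (\<rho>`{1..k})" by (subst sum.reindex[OF sig_inj[OF \<rho>]]) simp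
  finally have s1: "(-1::real)^sig_inv k N \<rho> = (-1)^(sum id (\<rho>`{1..k}) + (\<Sum>j=1..k. j))"
    unfolding sig_inv_eq[OF \<rho> kN] by (rule neg1_pow_shift)
  let ?c = "card {y\<in>?C. y < \<rho> i}"
  have cC: "card ?C = N - k" using sig_card[OF \<rho>] sig_range[OF \<rho>] by (simp add: card_Diff_subset)
  have "?c \<le> card ?C" by (rule card_mono) auto
  hence "(N - k - ?c) + \<rho> i = (N - k + i)" using card_below[OF \<rho> i] cC by linarith
  hence s2: "eps k N \<rho> i = (-1)^((N-k+i) + \<rho> i)" unfolding eps_def by (rule neg1_pow_shift)
  show ?thesis unfolding sgn2_def s1 s2 by (simp add: power_add[symmetric] ac_simps)
qed

lemma sum_split_R:
  assumes "\<rho> \<in> Sig k N"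
  shows "sum id (\<rho>`{1..k}) + sum id ({1..N} - \<rho>`{1..k}) = sum id {1..N}"
  using sum.subset_diff[OF sig_range[OF assms], where g=id] by simp

lemma sgn2_pair:
  assumes \<rho>: "\<rho> \<in> Sig k N" and \<rho>': "\<rho>' \<in> Sig k N" and kN: "k \<le> N"
    and s: "s \<in> {1..k}" and t: "t \<in> {1..k}"
    and T: "insert (\<rho> s) ({1..N} - \<rho>`{1..k}) = insert (\<rho>' t) ({1..N} - \<rho>'`{1..k})"
  shows "sgn2 k N \<rho> s * sgn2 k N \<rho>' t = (-1)^(s+t)"
proof -
  let ?C = "{1..N} - \<rho>`{1..k}" and ?C' = "{1..N} - \<rho>'`{1..k}"
  have "\<rho> s \<in> \<rho>`{1..k}" "\<rho>' t \<in> \<rho>'`{1..k}" using s t by auto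
  hence n: "\<rho> s \<notin> ?C" "\<rho>' t \<notin> ?C'" by auto
  have "sum id ?C + \<rho> s = sum id ?C' + \<rho>' t"
    using arg_cong[OF T, of "sum id"] n by simp
  hence e: "sum id (\<rho>'`{1..k}) + \<rho> s = sum id (\<rho>`{1..k}) + \<rho>' t"
    using sum_split_R[OF \<rho>] sum_split_R[OF \<rho>'] by linarith
  let ?K = "(\<Sum>j=1..k. j)"
  have "sgn2 k N \<rho> s * sgn2 k N \<rho>' t
     = (-1)^((sum id (\<rho>`{1..k}) + ?K + (N-k) + \<rho> s + s) + (sum id (\<rho>'`{1..k}) + ?K + (N-k) + \<rho>' t + t))"
    unfolding sgn2_formula[OF \<rho> kN s] sgn2_formula[OF \<rho>' kN t] by (simp add: power_add)
  also have "(sum id (\<rho>`{1..k}) + ?K + (N-k) + \<rho> s + s) + (sum id (\<rho>'`{1..k}) + ?K + (N-k) + \<rho>' t + t)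
      = 2 * (sum id (\<rho>`{1..k}) + ?K + (N-k) + \<rho>' t) + (s + t)" using e by simp
  finally show ?thesis by (simp only: neg1_pow_even)
qed

lemma Teq:
  assumes \<rho>: "\<rho> \<in> Sig k N" and \<rho>': "\<rho>' \<in> Sig k N" and ne: "\<rho> \<noteq> \<rho>'"
    and s: "s \<in> {1..k}" and t: "t \<in> {1..k}"
  shows "insert (\<rho> s) ({1..N} - \<rho>`{1..k}) = insert (\<rho>' t) ({1..N} - \<rho>'`{1..k})
     \<longleftrightarrow> (\<rho>`{1..k} \<inter> ({1..N} - \<rho>'`{1..k}) = {\<rho> s} \<and> ({1..N} - \<rho>`{1..k}) \<inter> \<rho>'`{1..k} = {\<rho>' t})"
    (is "insert ?x ?C = insert ?y ?C' \<longleftrightarrow> ?R \<inter> ?C' = _ \<and> ?C \<inter> ?R' = _")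
proof -
  have RN: "?R \<subseteq> {1..N}" "?R' \<subseteq> {1..N}" using sig_range \<rho> \<rho>' by auto
  have xR: "?x \<in> ?R" "?y \<in> ?R'" using s t by auto
  have RR: "?R \<noteq> ?R'" using sig_eq[OF \<rho> \<rho>'] ne by blast
  show ?thesis
  proof
    assume T: "insert ?x ?C = insert ?y ?C'"
    have xy: "?x \<noteq> ?y"
    proof
      assume e: "?x = ?y"
      have "?x \<notin> ?C" "?y \<notin> ?C'" using xR by auto
      hence "?C = ?C'" using T e by (metis insert_ident)
      hence "?R = ?R'" using RN by (metis Diff_Diff_Int inf.absorb_iff2)
      thus False using RR by blast
    qed
    have xC': "?x \<in> ?C'" using T xy by (metis insertE insertI1)
    have yC: "?y \<in> ?C" using T xy by (metis insertE insertI1)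
    have "?R \<inter> ?C' = {?x}"
    proof (intro equalityI subsetI)
      fix z assume z: "z \<in> ?R \<inter> ?C'"
      hence "z \<in> insert ?x ?C" using T by auto
      thus "z \<in> {?x}" using z by auto
    qed (use xC' xR in auto)
    moreover have "?C \<inter> ?R' = {?y}"
    proof (intro equalityI subsetI)
      fix z assume z: "z \<in> ?C \<inter> ?R'"
      hence "z \<in> insert ?y ?C'" using T[symmetric] by auto
      thus "z \<in> {?y}" using z by auto
    qed (use yC xR in auto)
    ultimately show "?R \<inter> ?C' = {?x} \<and> ?C \<inter> ?R' = {?y}" by simp
  next
    assume h: "?R \<inter> ?C' = {?x} \<and> ?C \<inter> ?R' = {?y}"
    show "insert ?x ?C = insert ?y ?C'"
    proof (intro equalityI subsetI)
      fix z assume z: "z \<in> insert ?x ?C"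
      show "z \<in> insert ?y ?C'"
      proof (cases "z = ?x")
        case True thus ?thesis using h by auto
      next
        case False
        hence "z \<in> ?C" using z by auto
        thus ?thesis using h by auto
      qed
    next
      fix z assume z: "z \<in> insert ?y ?C'"
      show "z \<in> insert ?x ?C"
      proof (cases "z = ?y")
        case True thus ?thesis using h by auto
      next
        case False
        hence "z \<in> ?C'" using z by auto
        thus ?thesis using h by auto
      qed
    qed
  qed
qed

lemma T_props:
  assumes \<rho>: "\<rho> \<in> Sig k N" and kN: "k \<le> N" and s: "s \<in> {1..k}"
  shows "insert (\<rho> s) ({1..N} - \<rho>`{1..k}) \<subseteq> {1..N}"
    "card (insert (\<rho> s) ({1..N} - \<rho>`{1..k})) = N - k + 1"
    "lam_star k N lam \<rho> * lam (\<rho> s) = prod lam (insert (\<rho> s) ({1..N} - \<rho>`{1..k}))"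
proof -
  have x: "\<rho> s \<in> \<rho>`{1..k}" using s by auto
  thus "insert (\<rho> s) ({1..N} - \<rho>`{1..k}) \<subseteq> {1..N}" using sig_range[OF \<rho>] by auto
  have cC: "card ({1..N} - \<rho>`{1..k}) = N - k" using sig_card[OF \<rho>] sig_range[OF \<rho>] by (simp add: card_Diff_subset)
  thus "card (insert (\<rho> s) ({1..N} - \<rho>`{1..k})) = N - k + 1" using x by simp
  show "lam_star k N lam \<rho> * lam (\<rho> s) = prod lam (insert (\<rho> s) ({1..N} - \<rho>`{1..k}))"
    unfolding lam_star_eq[OF \<rho> kN] using x by simp
qed

definition Tset :: "nat \<Rightarrow> nat \<Rightarrow> (nat \<Rightarrow> nat) \<Rightarrow> nat \<Rightarrow> nat set" where
  "Tset k N \<rho> i = insert (\<rho> i) ({1..N} - \<rho>`{1..k})"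

definition Fc :: "nat \<Rightarrow> nat \<Rightarrow> (nat \<Rightarrow> real) \<Rightarrow> ((nat \<Rightarrow> nat) \<Rightarrow> real) \<Rightarrow> (nat \<Rightarrow> nat) \<Rightarrow> nat \<Rightarrow> real" where
  "Fc k N lam a \<rho> i = (-1)^sig_inv k N \<rho> * a \<rho> * sqrt (lam_star k N lam \<rho> * lam (\<rho> i)) * eps k N \<rho> i"

lemma Fc_prod:
  assumes \<rho>: "\<rho> \<in> Sig k N" and \<rho>': "\<rho>' \<in> Sig k N" and kN: "k \<le> N"
    and lam: "\<And>i. i \<le> N \<Longrightarrow> 0 \<le> lam i"
    and s: "s \<in> {1..k}" and t: "t \<in> {1..k}" and T: "Tset k N \<rho> s = Tset k N \<rho>' t"
  shows "Fc k N lam a \<rho> s * Fc k N lam a \<rho>' t = a \<rho> * a \<rho>' * (lam_star k N lam \<rho> * lam (\<rho> s)) * (-1)^(s+t)"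
proof -
  let ?X = "lam_star k N lam \<rho> * lam (\<rho> s)"
  have X: "?X = prod lam (Tset k N \<rho> s)" unfolding Tset_def by (rule T_props(3)[OF \<rho> kN s])
  have "lam_star k N lam \<rho>' * lam (\<rho>' t) = prod lam (Tset k N \<rho>' t)"
    unfolding Tset_def by (rule T_props(3)[OF \<rho>' kN t])
  hence Y: "lam_star k N lam \<rho>' * lam (\<rho>' t) = ?X" using X T by simp
  have "?X \<ge> 0" unfolding X using T_props(1)[OF \<rho> kN s] lam
    by (intro prod_nonneg) (auto simp: Tset_def)
  hence sq: "sqrt ?X * sqrt ?X = ?X" by simp
  have sg: "sgn2 k N \<rho> s * sgn2 k N \<rho>' t = (-1)^(s+t)"
    by (rule sgn2_pair[OF \<rho> \<rho>' kN s t]) (use T in \<open>simp add: Tset_def\<close>)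
  have "Fc k N lam a \<rho> s * Fc k N lam a \<rho>' t = a \<rho> * a \<rho>' * (sqrt ?X * sqrt ?X) * (sgn2 k N \<rho> s * sgn2 k N \<rho>' t)"
    unfolding Fc_def sgn2_def Y by (simp add: ac_simps)
  thus ?thesis unfolding sq sg .
qed

lemma pair_eq:
  assumes \<rho>: "\<rho> \<in> Sig k N" and \<rho>': "\<rho>' \<in> Sig k N" and kN: "k \<le> N"
    and lam: "\<And>i. i \<le> N \<Longrightarrow> 0 \<le> lam i"
  shows "(\<Sum>i=1..k. \<Sum>j=1..k. if Tset k N \<rho> i = Tset k N \<rho>' j then Fc k N lam a \<rho> i * Fc k N lam a \<rho>' j else 0)
     = a \<rho> * a \<rho>' * mentry k N lam \<rho> \<rho>' - (if \<rho> = \<rho>' then a \<rho> * a \<rho>' * (lam_star k N lam \<rho> * lam 0) else 0)"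
proof -
  have step: "(\<Sum>i=1..k. \<Sum>j=1..k. if Tset k N \<rho> i = Tset k N \<rho>' j then Fc k N lam a \<rho> i * Fc k N lam a \<rho>' j else 0)
     = (\<Sum>i=1..k. \<Sum>j=1..k. if Tset k N \<rho> i = Tset k N \<rho>' j then a \<rho> * a \<rho>' * (lam_star k N lam \<rho> * lam (\<rho> i)) * (-1)^(i+j) else 0)"
    by (intro sum.cong refl) (simp add: Fc_prod[OF \<rho> \<rho>' kN lam])
  show ?thesis
  proof (cases "\<rho> = \<rho>'")
    case True
    have "\<And>i j. i \<in> {1..k} \<Longrightarrow> j \<in> {1..k} \<Longrightarrow> Tset k N \<rho> i = Tset k N \<rho> j \<longleftrightarrow> i = j"
    proof -
      fix i j assume i: "i \<in> {1..k}" and j: "j \<in> {1..k}"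
      show "Tset k N \<rho> i = Tset k N \<rho> j \<longleftrightarrow> i = j"
      proof
        assume e: "Tset k N \<rho> i = Tset k N \<rho> j"
        have "\<rho> i \<in> \<rho>`{1..k}" using i by auto
        hence "\<rho> i = \<rho> j" using e unfolding Tset_def by blast
        thus "i = j" using sig_inj[OF \<rho>] i j by (meson inj_onD)
      qed simp
    qed
    hence "(\<Sum>i=1..k. \<Sum>j=1..k. if Tset k N \<rho> i = Tset k N \<rho>' j then a \<rho> * a \<rho>' * (lam_star k N lam \<rho> * lam (\<rho> i)) * (-1)^(i+j) else 0)
        = (\<Sum>i=1..k. \<Sum>j=1..k. if i = j then a \<rho> * a \<rho> * (lam_star k N lam \<rho> * lam (\<rho> i)) * (-1)^(i+j) else 0)"
      using True by (intro sum.cong refl) auto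
    also have "\<dots> = (\<Sum>i=1..k. a \<rho> * a \<rho> * (lam_star k N lam \<rho> * lam (\<rho> i)))"
      by (intro sum.cong refl) (simp add: sum.delta mult_2[symmetric] neg1_pow_even[where y=0, simplified])
    also have "\<dots> = a \<rho> * a \<rho> * mentry k N lam \<rho> \<rho> - a \<rho> * a \<rho> * (lam_star k N lam \<rho> * lam 0)"
      unfolding mentry_def by (simp add: sum_distrib_left algebra_simps)
    finally show ?thesis using step True by simp
  next
    case False
    let ?R = "\<rho>`{1..k}" and ?R' = "\<rho>'`{1..k}"
    let ?C = "{1..N} - ?R" and ?C' = "{1..N} - ?R'"
    define P where "P = (\<lambda>s t. ?R \<inter> ?C' = {\<rho> s} \<and> ?C \<inter> ?R' = {\<rho>' t})"
    have img: "cmap k N \<rho> ` {1..N-k} = ?C" "cmap k N \<rho>' ` {1..N-k} = ?C'"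
      using cmap_img[OF \<rho> kN] cmap_img[OF \<rho>' kN] by auto
    have TP: "\<And>i j. i \<in> {1..k} \<Longrightarrow> j \<in> {1..k} \<Longrightarrow> Tset k N \<rho> i = Tset k N \<rho>' j \<longleftrightarrow> P i j"
      unfolding Tset_def P_def using Teq[OF \<rho> \<rho>' False] by blast
    have me: "mentry k N lam \<rho> \<rho>' = (if \<exists>s\<in>{1..k}. \<exists>t\<in>{1..k}. P s t
        then (let (s, t) = (SOME (s, t). s \<in> {1..k} \<and> t \<in> {1..k} \<and> P s t)
            in (-1) ^ (s + t) * lam_star k N lam \<rho> * lam (\<rho> s)) else 0)"
      unfolding mentry_def img P_def using False by simp
    show ?thesis
    proof (cases "\<exists>s\<in>{1..k}. \<exists>t\<in>{1..k}. P s t")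
      case True
      then obtain s t where st: "s \<in> {1..k}" "t \<in> {1..k}" "P s t" by blast
      have uniq: "\<And>i j. i \<in> {1..k} \<Longrightarrow> j \<in> {1..k} \<Longrightarrow> P i j \<longleftrightarrow> i = s \<and> j = t"
      proof -
        fix i j assume i: "i \<in> {1..k}" and j: "j \<in> {1..k}"
        show "P i j \<longleftrightarrow> i = s \<and> j = t"
        proof
          assume "P i j"
          hence "\<rho> i = \<rho> s" "\<rho>' j = \<rho>' t" using st(3) unfolding P_def by auto
          thus "i = s \<and> j = t" using sig_inj[OF \<rho>] sig_inj[OF \<rho>'] i j st by (meson inj_onD)
        qed (use st in simp)
      qed
      have some: "(SOME (s, t). s \<in> {1..k} \<and> t \<in> {1..k} \<and> P s t) = (s, t)"
      proof (rule some_equality)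
        show "case (s, t) of (s, t) \<Rightarrow> s \<in> {1..k} \<and> t \<in> {1..k} \<and> P s t" using st by simp
        fix p assume "case p of (s, t) \<Rightarrow> s \<in> {1..k} \<and> t \<in> {1..k} \<and> P s t"
        thus "p = (s, t)" using uniq by (cases p) auto
      qed
      have "(\<Sum>i=1..k. \<Sum>j=1..k. if Tset k N \<rho> i = Tset k N \<rho>' j then a \<rho> * a \<rho>' * (lam_star k N lam \<rho> * lam (\<rho> i)) * (-1)^(i+j) else 0)
        = (\<Sum>i=1..k. \<Sum>j=1..k. if i = s then (if j = t then a \<rho> * a \<rho>' * (lam_star k N lam \<rho> * lam (\<rho> i)) * (-1)^(i+j) else 0) else 0)"
        using TP uniq by (intro sum.cong refl) auto
      also have "\<dots> = (\<Sum>i=1..k. if i = s then a \<rho> * a \<rho>' * (lam_star k N lam \<rho> * lam (\<rho> i)) * (-1)^(i+t) else 0)"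
        using st by (intro sum.cong refl) (simp add: sum.delta)
      also have "\<dots> = a \<rho> * a \<rho>' * (lam_star k N lam \<rho> * lam (\<rho> s)) * (-1)^(s+t)"
        using st by (simp add: sum.delta)
      also have "\<dots> = a \<rho> * a \<rho>' * mentry k N lam \<rho> \<rho>'"
        unfolding me some using True by simp
      finally show ?thesis using step False by simp
    next
      case nP: False
      have "(\<Sum>i=1..k. \<Sum>j=1..k. if Tset k N \<rho> i = Tset k N \<rho>' j then a \<rho> * a \<rho>' * (lam_star k N lam \<rho> * lam (\<rho> i)) * (-1)^(i+j) else 0) = 0"
        using TP nP by (intro sum.neutral ballI) auto
      thus ?thesis using step False nP me by simp
    qed
  qed
qed

lemma sum4_swap:
  fixes f :: "'t \<Rightarrow> 'r \<Rightarrow> nat \<Rightarrow> real"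
  shows "(\<Sum>\<tau>\<in>S. (\<Sum>\<rho>\<in>A. \<Sum>i\<in>I. f \<tau> \<rho> i) * (\<Sum>\<rho>'\<in>A. \<Sum>j\<in>I. f \<tau> \<rho>' j))
    = (\<Sum>\<rho>\<in>A. \<Sum>\<rho>'\<in>A. \<Sum>i\<in>I. \<Sum>j\<in>I. \<Sum>\<tau>\<in>S. f \<tau> \<rho> i * f \<tau> \<rho>' j)"
proof -
  have "(\<Sum>\<tau>\<in>S. (\<Sum>\<rho>\<in>A. \<Sum>i\<in>I. f \<tau> \<rho> i) * (\<Sum>\<rho>'\<in>A. \<Sum>j\<in>I. f \<tau> \<rho>' j))
     = (\<Sum>\<tau>\<in>S. \<Sum>\<rho>\<in>A. \<Sum>\<rho>'\<in>A. \<Sum>i\<in>I. \<Sum>j\<in>I. f \<tau> \<rho> i * f \<tau> \<rho>' j)"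
    by (simp add: sum_product)
  also have "\<dots> = (\<Sum>\<rho>\<in>A. \<Sum>\<tau>\<in>S. \<Sum>\<rho>'\<in>A. \<Sum>i\<in>I. \<Sum>j\<in>I. f \<tau> \<rho> i * f \<tau> \<rho>' j)"
    by (rule sum.swap)
  also have "\<dots> = (\<Sum>\<rho>\<in>A. \<Sum>\<rho>'\<in>A. \<Sum>\<tau>\<in>S. \<Sum>i\<in>I. \<Sum>j\<in>I. f \<tau> \<rho> i * f \<tau> \<rho>' j)"
    by (intro sum.cong refl, rule sum.swap)
  also have "\<dots> = (\<Sum>\<rho>\<in>A. \<Sum>\<rho>'\<in>A. \<Sum>i\<in>I. \<Sum>\<tau>\<in>S. \<Sum>j\<in>I. f \<tau> \<rho> i * f \<tau> \<rho>' j)"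
    by (intro sum.cong refl, rule sum.swap)
  also have "\<dots> = (\<Sum>\<rho>\<in>A. \<Sum>\<rho>'\<in>A. \<Sum>i\<in>I. \<Sum>j\<in>I. \<Sum>\<tau>\<in>S. f \<tau> \<rho> i * f \<tau> \<rho>' j)"
    by (intro sum.cong refl, rule sum.swap)
  finally show ?thesis .
qed

lemma finite_Sig: "finite (Sig m N)"
proof (rule inj_on_finite[where f = "\<lambda>\<rho>. \<rho>`{1..m}" and B = "Pow {1..N}"])
  show "inj_on (\<lambda>\<rho>. \<rho>`{1..m}) (Sig m N)" by (rule inj_onI) (rule sig_eq)
  show "(\<lambda>\<rho>. \<rho>`{1..m}) ` Sig m N \<subseteq> Pow {1..N}" using sig_range by blast
qed simp

lemma sum_ind:
  assumes T1: "T1 \<subseteq> {1..N}" "card T1 = m"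
  shows "(\<Sum>\<tau>\<in>Sig m N. (if \<tau>`{1..m} = T1 then x else 0) * (if \<tau>`{1..m} = T2 then y else (0::real)))
    = (if T1 = T2 then x * y else 0)"
proof -
  have "(\<Sum>\<tau>\<in>Sig m N. (if \<tau>`{1..m} = T1 then x else 0) * (if \<tau>`{1..m} = T2 then y else (0::real)))
      = (\<Sum>\<tau>\<in>Sig m N. if \<tau> = of_set m T1 then (if T1 = T2 then x * y else 0) else 0)"
  proof (intro sum.cong refl)
    fix \<tau> assume \<tau>: "\<tau> \<in> Sig m N"
    have "\<tau>`{1..m} = T1 \<longleftrightarrow> \<tau> = of_set m T1"
      using sig_eq[OF \<tau> of_set_sig(1)[OF T1]] of_set_sig(2)[OF T1] by auto
    thus "(if \<tau>`{1..m} = T1 then x else 0) * (if \<tau>`{1..m} = T2 then y else (0::real))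
      = (if \<tau> = of_set m T1 then (if T1 = T2 then x * y else 0) else 0)" by auto
  qed
  also have "\<dots> = (if T1 = T2 then x * y else 0)"
    using of_set_sig(1)[OF T1] finite_Sig by (simp add: sum.delta')
  finally show ?thesis .
qed

lemma main_gen:
  fixes k N :: nat and a :: "(nat \<Rightarrow> nat) \<Rightarrow> real" and lam :: "nat \<Rightarrow> real"
    and \<mu> :: "nat \<Rightarrow> 'v" and \<mu>' :: "nat \<Rightarrow> 'v \<Rightarrow> real"
  assumes kN: "k \<le> N" and lam: "\<And>i. i \<le> N \<Longrightarrow> 0 \<le> lam i"
    and d: "\<And>i j. i \<in> {1..N} \<Longrightarrow> j \<in> {1..N} \<Longrightarrow> \<mu>' i (\<mu> j) = (if i = j then 1 else 0)"
  shows "(\<Sum>\<rho>\<in>Sig k N. \<Sum>\<rho>'\<in>Sig k N. a \<rho> * a \<rho>' * mentry k N lam \<rho> \<rho>')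
    = lam 0 * (\<Sum>\<rho>\<in>Sig k N. (a \<rho>)\<^sup>2 * lam_star k N lam \<rho>)
      + alt_inner (N - k + 1) N \<mu> (theta k N lam a \<mu>') (theta k N lam a \<mu>')"
proof -
  let ?S = "Sig k N" and ?m = "N - k + 1"
  define f where "f = (\<lambda>\<tau> \<rho> i. if \<tau>`{1..?m} = Tset k N \<rho> i then Fc k N lam a \<rho> i else 0)"
  have thA: "theta k N lam a \<mu>' (map (\<mu> \<circ> \<tau>) [1..<?m+1]) = (\<Sum>\<rho>\<in>?S. \<Sum>i\<in>{1..k}. f \<tau> \<rho> i)"
    if \<tau>: "\<tau> \<in> Sig ?m N" for \<tau>
    unfolding theta_def
  proof (rule sum.cong[OF refl])
    fix \<rho> assume \<rho>: "\<rho> \<in> ?S"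
    have "(\<Sum>i=1..k. sqrt (lam_star k N lam \<rho> * lam (\<rho> i)) *
           wedge (map (\<mu>' \<circ> cmap k N \<rho>) [1..<N-k+1] @ [\<mu>' (\<rho> i)]) (map (\<mu> \<circ> \<tau>) [1..<?m+1]))
      = (\<Sum>i=1..k. sqrt (lam_star k N lam \<rho> * lam (\<rho> i)) *
           (if \<tau>`{1..?m} = Tset k N \<rho> i then eps k N \<rho> i else 0))"
    proof (rule sum.cong[OF refl])
      fix i assume i: "i \<in> {1..k}"
      show "sqrt (lam_star k N lam \<rho> * lam (\<rho> i)) *
           wedge (map (\<mu>' \<circ> cmap k N \<rho>) [1..<N-k+1] @ [\<mu>' (\<rho> i)]) (map (\<mu> \<circ> \<tau>) [1..<?m+1])
        = sqrt (lam_star k N lam \<rho> * lam (\<rho> i)) *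
           (if \<tau>`{1..?m} = Tset k N \<rho> i then eps k N \<rho> i else 0)"
        using wedge_theta[where N=N and \<mu>'=\<mu>' and \<mu>=\<mu>, OF d \<rho> kN i \<tau>] unfolding Tset_def eps_def
        by (simp only:)
    qed
    thus "(-1) ^ sig_inv k N \<rho> * a \<rho> *
        (\<Sum>i=1..k. sqrt (lam_star k N lam \<rho> * lam (\<rho> i)) *
           wedge (map (\<mu>' \<circ> cmap k N \<rho>) [1..<N-k+1] @ [\<mu>' (\<rho> i)]) (map (\<mu> \<circ> \<tau>) [1..<?m+1]))
      = (\<Sum>i\<in>{1..k}. f \<tau> \<rho> i)"
      by (simp add: sum_distrib_left f_def Fc_def if_distrib ac_simps cong: if_cong)
  qed
  have "alt_inner ?m N \<mu> (theta k N lam a \<mu>') (theta k N lam a \<mu>')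
     = (\<Sum>\<tau>\<in>Sig ?m N. (\<Sum>\<rho>\<in>?S. \<Sum>i\<in>{1..k}. f \<tau> \<rho> i) * (\<Sum>\<rho>'\<in>?S. \<Sum>j\<in>{1..k}. f \<tau> \<rho>' j))"
    unfolding alt_inner_def by (intro sum.cong refl) (simp only: thA)
  also have "\<dots> = (\<Sum>\<rho>\<in>?S. \<Sum>\<rho>'\<in>?S. \<Sum>i\<in>{1..k}. \<Sum>j\<in>{1..k}. \<Sum>\<tau>\<in>Sig ?m N. f \<tau> \<rho> i * f \<tau> \<rho>' j)"
    by (rule sum4_swap)
  also have "\<dots> = (\<Sum>\<rho>\<in>?S. \<Sum>\<rho>'\<in>?S. \<Sum>i\<in>{1..k}. \<Sum>j\<in>{1..k}.
        if Tset k N \<rho> i = Tset k N \<rho>' j then Fc k N lam a \<rho> i * Fc k N lam a \<rho>' j else 0)"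
  proof (intro sum.cong refl)
    fix \<rho> \<rho>' i j assume \<rho>: "\<rho> \<in> ?S" and i: "i \<in> {1..k}"
    show "(\<Sum>\<tau>\<in>Sig ?m N. f \<tau> \<rho> i * f \<tau> \<rho>' j)
      = (if Tset k N \<rho> i = Tset k N \<rho>' j then Fc k N lam a \<rho> i * Fc k N lam a \<rho>' j else 0)"
      unfolding f_def
      by (rule sum_ind) (use T_props[OF \<rho> kN i] in \<open>auto simp: Tset_def\<close>)
  qed
  also have "\<dots> = (\<Sum>\<rho>\<in>?S. \<Sum>\<rho>'\<in>?S. a \<rho> * a \<rho>' * mentry k N lam \<rho> \<rho>'
        - (if \<rho> = \<rho>' then a \<rho> * a \<rho>' * (lam_star k N lam \<rho> * lam 0) else 0))"
    by (intro sum.cong refl) (rule pair_eq[OF _ _ kN lam])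
  also have "\<dots> = (\<Sum>\<rho>\<in>?S. \<Sum>\<rho>'\<in>?S. a \<rho> * a \<rho>' * mentry k N lam \<rho> \<rho>')
        - (\<Sum>\<rho>\<in>?S. a \<rho> * a \<rho> * (lam_star k N lam \<rho> * lam 0))"
    using finite_Sig by (simp add: sum_subtractf sum.delta)
  finally show ?thesis
    by (simp add: sum_distrib_left power2_eq_square algebra_simps)
qed


theorem lemma3p7:
  fixes k :: nat and a :: "(nat \<Rightarrow> nat) \<Rightarrow> real" and lam :: "nat \<Rightarrow> real"
    and \<mu> :: "nat \<Rightarrow> real ^ 'n" and \<mu>' :: "nat \<Rightarrow> real ^ 'n \<Rightarrow> real"
  assumes "1 \<le> k" and "k \<le> CARD('n)"
    and "\<And>i. i \<le> CARD('n) \<Longrightarrow> 0 \<le> lam i"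
    and "\<And>i j. i \<in> {1..CARD('n)} \<Longrightarrow> j \<in> {1..CARD('n)} \<Longrightarrow>
           \<mu> i \<bullet> \<mu> j = (if i = j then 1 else 0)"
    and "\<And>i. i \<in> {1..CARD('n)} \<Longrightarrow> linear (\<mu>' i)"
    and "\<And>i j. i \<in> {1..CARD('n)} \<Longrightarrow> j \<in> {1..CARD('n)} \<Longrightarrow>
           \<mu>' i (\<mu> j) = (if i = j then 1 else 0)"
  shows "(\<Sum>\<rho>\<in>Sig k CARD('n). \<Sum>\<rho>'\<in>Sig k CARD('n). a \<rho> * a \<rho>' * mentry k CARD('n) lam \<rho> \<rho>')
           = lam 0 * (\<Sum>\<rho>\<in>Sig k CARD('n). (a \<rho>)\<^sup>2 * lam_star k CARD('n) lam \<rho>)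
             + alt_inner (CARD('n) - k + 1) CARD('n) \<mu>
                 (theta k CARD('n) lam a \<mu>') (theta k CARD('n) lam a \<mu>')
         \<and> 0 \<le> (\<Sum>\<rho>\<in>Sig k CARD('n). \<Sum>\<rho>'\<in>Sig k CARD('n). a \<rho> * a \<rho>' * mentry k CARD('n) lam \<rho> \<rho>')"
proof -
  let ?N = "CARD('n)"
  have eq: "(\<Sum>\<rho>\<in>Sig k ?N. \<Sum>\<rho>'\<in>Sig k ?N. a \<rho> * a \<rho>' * mentry k ?N lam \<rho> \<rho>')
           = lam 0 * (\<Sum>\<rho>\<in>Sig k ?N. (a \<rho>)\<^sup>2 * lam_star k ?N lam \<rho>)
             + alt_inner (?N - k + 1) ?N \<mu> (theta k ?N lam a \<mu>') (theta k ?N lam a \<mu>')"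
    by (rule main_gen[where \<mu>=\<mu> and \<mu>'=\<mu>', OF assms(2) assms(3) assms(6)])
  have l0: "0 \<le> lam 0" using assms(3) by simp
  have s0: "0 \<le> (\<Sum>\<rho>\<in>Sig k ?N. (a \<rho>)\<^sup>2 * lam_star k ?N lam \<rho>)"
  proof (rule sum_nonneg)
    fix \<rho> assume \<rho>: "\<rho> \<in> Sig k ?N"
    have "0 \<le> lam_star k ?N lam \<rho>" unfolding lam_star_eq[OF \<rho> assms(2)]
      using assms(3) by (intro prod_nonneg) auto
    thus "0 \<le> (a \<rho>)\<^sup>2 * lam_star k ?N lam \<rho>" by simp
  qed
  have a0: "0 \<le> alt_inner (?N - k + 1) ?N \<mu> (theta k ?N lam a \<mu>') (theta k ?N lam a \<mu>')"
    unfolding alt_inner_def by (intro sum_nonneg) simp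
  show ?thesis using eq l0 s0 a0 by simp
qed

end
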